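(* Let $\{(x_i,w_i)\}_{i=1}^n$ be a set of strategies with proportions $x_i$ and fitnesses $w_i$, and let $\{(Y_j,W_j,c_j)\}_{j=1}^m$ be a set of compound strategies that factors $\{(x_i,w_i)\}_{i=1}^n$. Then the replicator system \[ \dot{x}_i = x_i(w_i - \langle w \rangle), \qquad \langle w \rangle = \sum_{k=1}^n x_k w_k, \] and the nested system \[ \dot{Y}_j = Y_j(W_j - \langle W \rangle), \qquad \dot{y}_{ij} = y_{ij}(w_i - \langle w \rangle_j), \] where $\langle W \rangle = \sum_{k=1}^m Y_k W_k$ and $\langle w \rangle_j = \sum_{k=1}^n y_{kj} w_k$, describe the same dynamics.
   Context: A compound strategy $(Y_j,W_j,c_j)$ of a set of strategies $\{(x_i,w_i)\}_{i=1}^n$ is defined by: a component function $c_j$ with $\sum_{i=1}^n c_j(i) = 1$; a weight $Y_j := \sum_{i=1}^n c_j(i) x_i$; a profile $y_{ij} = \frac{c_j(i) x_i}{Y_j}$; and a fitness $W_j = \sum_{i=1}^n y_{ij} w_i$. A set of compound strategies $\{(Y_j,W_j,c_j)\}_{j=1}^m$ factors a set of strategies $\{(x_i,w_i)\}_{i=1}^n$, with $x_i = \sum_{j: c_j(i)\neq 0} \frac{y_{ij} Y_j}{c_j(i)}$, if for all $1 \le i \le n$, $\sum_{j=1}^m c_j(i) = 1$. *)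

theory Defs
  imports Complex_Main
begin

text \<open>A component-function family is c :: nat => nat => real, with c j i = c_j(i).\<close>

definition compound_weight :: "(nat \<Rightarrow> nat \<Rightarrow> real) \<Rightarrow> nat \<Rightarrow> (nat \<Rightarrow> real) \<Rightarrow> nat \<Rightarrow> real" where
  "compound_weight c n x j = (\<Sum>i=1..n. c j i * x i)"

definition profile :: "(nat \<Rightarrow> nat \<Rightarrow> real) \<Rightarrow> nat \<Rightarrow> (nat \<Rightarrow> real) \<Rightarrow> nat \<Rightarrow> nat \<Rightarrow> real" where
  "profile c n x i j = c j i * x i / compound_weight c n x j"

definition compound_fitness :: "(nat \<Rightarrow> nat \<Rightarrow> real) \<Rightarrow> nat \<Rightarrow> (nat \<Rightarrow> real) \<Rightarrow> (nat \<Rightarrow> real) \<Rightarrow> nat \<Rightarrow> real" where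
  "compound_fitness c n x w j = (\<Sum>i=1..n. profile c n x i j * w i)"

definition factors :: "(nat \<Rightarrow> nat \<Rightarrow> real) \<Rightarrow> nat \<Rightarrow> nat \<Rightarrow> bool" where
  "factors c n m \<longleftrightarrow> (\<forall>j\<in>{1..m}. (\<Sum>i=1..n. c j i) = 1) \<and> (\<forall>i\<in>{1..n}. (\<Sum>j=1..m. c j i) = 1)"

text \<open>Trajectories: x t i is the proportion of strategy i at time t, w t i its fitness
  at time t (w may depend on the state through t arbitrarily). I is the time domain.\<close>

definition replicator_system :: "nat \<Rightarrow> real set \<Rightarrow> (real \<Rightarrow> nat \<Rightarrow> real) \<Rightarrow> (real \<Rightarrow> nat \<Rightarrow> real) \<Rightarrow> bool" where
  "replicator_system n I x w \<longleftrightarrow>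
     (\<forall>t\<in>I. \<forall>i\<in>{1..n}.
        ((\<lambda>s. x s i) has_real_derivative
           x t i * (w t i - (\<Sum>k=1..n. x t k * w t k))) (at t within I))"

text \<open>The nested system for Y_j(t) = compound weight, y_ij(t) = profile of x(t).\<close>
definition nested_system :: "(nat \<Rightarrow> nat \<Rightarrow> real) \<Rightarrow> nat \<Rightarrow> nat \<Rightarrow> real set \<Rightarrow> (real \<Rightarrow> nat \<Rightarrow> real) \<Rightarrow> (real \<Rightarrow> nat \<Rightarrow> real) \<Rightarrow> bool" where
  "nested_system c n m I x w \<longleftrightarrow>
     (\<forall>t\<in>I.
       (\<forall>j\<in>{1..m}.
          ((\<lambda>s. compound_weight c n (x s) j) has_real_derivative
             compound_weight c n (x t) j *
               (compound_fitness c n (x t) (w t) j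
                 - (\<Sum>k=1..m. compound_weight c n (x t) k * compound_fitness c n (x t) (w t) k)))
           (at t within I)) \<and>
       (\<forall>i\<in>{1..n}. \<forall>j\<in>{1..m}.
          ((\<lambda>s. profile c n (x s) i j) has_real_derivative
             profile c n (x t) i j *
               (w t i - (\<Sum>k=1..n. profile c n (x t) k j * w t k)))
           (at t within I)))"

end

theory Submission
  imports Defs
begin

lemma YW_eq:
  assumes "compound_weight c n x k \<noteq> 0"
  shows "compound_weight c n x k * compound_fitness c n x w k = (\<Sum>i=1..n. c k i * x i * w i)"
  using assms unfolding compound_fitness_def profile_def
  by (simp add: sum_distrib_left)

lemma avg_eq:
  assumes "factors c n m" "\<forall>j\<in>{1..m}. compound_weight c n x j \<noteq> 0"
  shows "(\<Sum>k=1..m. compound_weight c n x k * compound_fitness c n x w k) = (\<Sum>i=1..n. x i * w i)"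
proof -
  have "(\<Sum>k=1..m. compound_weight c n x k * compound_fitness c n x w k)
      = (\<Sum>k=1..m. \<Sum>i=1..n. c k i * x i * w i)"
    using assms(2) YW_eq by (intro sum.cong) auto
  also have "\<dots> = (\<Sum>i=1..n. \<Sum>k=1..m. c k i * x i * w i)" by (rule sum.swap)
  also have "\<dots> = (\<Sum>i=1..n. (\<Sum>k=1..m. c k i) * (x i * w i))"
    by (simp add: sum_distrib_right mult.assoc)
  also have "\<dots> = (\<Sum>i=1..n. x i * w i)"
    using assms(1) unfolding factors_def by (intro sum.cong) auto
  finally show ?thesis .
qed

lemma x_recon:
  assumes "factors c n m" "\<forall>j\<in>{1..m}. compound_weight c n x j \<noteq> 0" "i \<in> {1..n}"
  shows "x i = (\<Sum>j=1..m. profile c n x i j * compound_weight c n x j)"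
proof -
  have "(\<Sum>j=1..m. profile c n x i j * compound_weight c n x j) = (\<Sum>j=1..m. c j i * x i)"
    using assms(2) unfolding profile_def by (intro sum.cong) auto
  also have "\<dots> = (\<Sum>j=1..m. c j i) * x i" by (simp add: sum_distrib_right)
  also have "\<dots> = x i" using assms(1,3) unfolding factors_def by auto
  finally show ?thesis by simp
qed

theorem mainTheorem1:
  fixes c :: "nat \<Rightarrow> nat \<Rightarrow> real" and n m :: nat and I :: "real set"
    and x w :: "real \<Rightarrow> nat \<Rightarrow> real"
  assumes "factors c n m"
    and "\<forall>t\<in>I. \<forall>j\<in>{1..m}. compound_weight c n (x t) j \<noteq> 0"
  shows "replicator_system n I x w \<longleftrightarrow> nested_system c n m I x w"
proof
  assume R: "replicator_system n I x w"
  show "nested_system c n m I x w"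
    unfolding nested_system_def
  proof (intro ballI conjI)
    fix t assume t: "t \<in> I"
    define A where "A = (\<Sum>k=1..n. x t k * w t k)"
    have dx: "((\<lambda>s. x s i) has_real_derivative x t i * (w t i - A)) (at t within I)"
      if "i \<in> {1..n}" for i using R t that unfolding replicator_system_def A_def by blast
    have dY: "((\<lambda>s. compound_weight c n (x s) j) has_real_derivative
        (\<Sum>i=1..n. c j i * (x t i * (w t i - A)))) (at t within I)" for j
      unfolding compound_weight_def
      by (intro DERIV_sum DERIV_cmult dx) simp
    have avg: "(\<Sum>k=1..m. compound_weight c n (x t) k * compound_fitness c n (x t) (w t) k) = A"
      using avg_eq[OF assms(1)] assms(2) t unfolding A_def by blast
    have Yval: "(\<Sum>i=1..n. c j i * (x t i * (w t i - A))) =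
        compound_weight c n (x t) j * (compound_fitness c n (x t) (w t) j - A)"
      if "j \<in> {1..m}" for j
    proof -
      have "compound_weight c n (x t) j * (compound_fitness c n (x t) (w t) j - A)
          = (\<Sum>i=1..n. c j i * x t i * w t i) - compound_weight c n (x t) j * A"
        using YW_eq[of c n "x t" j "w t"] assms(2) t that by (simp add: right_diff_distrib)
      also have "\<dots> = (\<Sum>i=1..n. c j i * (x t i * (w t i - A)))"
        unfolding compound_weight_def sum_distrib_right sum_subtractf[symmetric]
        by (intro sum.cong) (auto simp: algebra_simps)
      finally show ?thesis by simp
    qed
    show "((\<lambda>s. compound_weight c n (x s) j) has_real_derivative
             compound_weight c n (x t) j *
               (compound_fitness c n (x t) (w t) j
                 - (\<Sum>k=1..m. compound_weight c n (x t) k * compound_fitness c n (x t) (w t) k)))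
           (at t within I)" if j: "j \<in> {1..m}" for j
      using dY[of j] Yval[OF j] avg by simp
    show "((\<lambda>s. profile c n (x s) i j) has_real_derivative
             profile c n (x t) i j *
               (w t i - (\<Sum>k=1..n. profile c n (x t) k j * w t k)))
           (at t within I)" if i: "i \<in> {1..n}" and j: "j \<in> {1..m}" for i j
    proof -
      define Y where "Y = compound_weight c n (x t) j"
      define W where "W = compound_fitness c n (x t) (w t) j"
      have Y0: "Y \<noteq> 0" using assms(2) t j unfolding Y_def by blast
      have d: "((\<lambda>s. profile c n (x s) i j) has_real_derivative
          ((c j i * (x t i * (w t i - A))) * Y - c j i * x t i * (Y * (W - A))) / (Y * Y)) (at t within I)"
        unfolding profile_def
        using DERIV_divide[OF DERIV_cmult[OF dx[OF i]] dY[of j], of "c j i"] Y0 Yval[OF j]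
        unfolding Y_def W_def by simp
      have W: "W = (\<Sum>k=1..n. profile c n (x t) k j * w t k)"
        unfolding W_def compound_fitness_def ..
      have "((c j i * (x t i * (w t i - A))) * Y - c j i * x t i * (Y * (W - A))) / (Y * Y)
          = profile c n (x t) i j * (w t i - W)"
        unfolding profile_def Y_def[symmetric] using Y0 by (simp add: field_simps)
      with d W show ?thesis by simp
    qed
  qed
next
  assume N: "nested_system c n m I x w"
  show "replicator_system n I x w"
    unfolding replicator_system_def
  proof (intro ballI)
    fix t i assume t: "t \<in> I" and i: "i \<in> {1..n}"
    define A where "A = (\<Sum>k=1..n. x t k * w t k)"
    define Y where "Y = (\<lambda>j. compound_weight c n (x t) j)"
    define W where "W = (\<lambda>j. compound_fitness c n (x t) (w t) j)"
    define y where "y = (\<lambda>j. profile c n (x t) i j)"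
    have avg: "(\<Sum>k=1..m. compound_weight c n (x t) k * compound_fitness c n (x t) (w t) k) = A"
      using avg_eq[OF assms(1)] assms(2) t unfolding A_def by blast
    have dY: "((\<lambda>s. compound_weight c n (x s) j) has_real_derivative Y j * (W j - A)) (at t within I)"
      if "j \<in> {1..m}" for j using N t that avg unfolding nested_system_def Y_def W_def by auto
    have dy: "((\<lambda>s. profile c n (x s) i j) has_real_derivative y j * (w t i - W j)) (at t within I)"
      if "j \<in> {1..m}" for j using N t that i unfolding nested_system_def y_def W_def compound_fitness_def
      by auto
    have ds: "((\<lambda>s. \<Sum>j=1..m. profile c n (x s) i j * compound_weight c n (x s) j) has_real_derivative
        (\<Sum>j=1..m. y j * (w t i - W j) * Y j + Y j * (W j - A) * y j)) (at t within I)"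
    proof (rule DERIV_sum)
      fix j assume j: "j \<in> {1..m}"
      show "((\<lambda>s. profile c n (x s) i j * compound_weight c n (x s) j) has_real_derivative
          y j * (w t i - W j) * Y j + Y j * (W j - A) * y j) (at t within I)"
        using DERIV_mult[OF dy[OF j] dY[OF j]] unfolding y_def Y_def by simp
    qed
    have "(\<Sum>j=1..m. y j * (w t i - W j) * Y j + Y j * (W j - A) * y j)
        = (\<Sum>j=1..m. (y j * Y j) * (w t i - A))"
      by (intro sum.cong) (auto simp: algebra_simps)
    also have "\<dots> = (\<Sum>j=1..m. y j * Y j) * (w t i - A)" by (simp add: sum_distrib_right)
    also have "(\<Sum>j=1..m. y j * Y j) = x t i"
      using x_recon[OF assms(1), of "x t" i] assms(2) t i unfolding y_def Y_def by auto
    finally have val: "(\<Sum>j=1..m. y j * (w t i - W j) * Y j + Y j * (W j - A) * y j) = x t i * (w t i - A)" .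
    show "((\<lambda>s. x s i) has_real_derivative x t i * (w t i - (\<Sum>k=1..n. x t k * w t k))) (at t within I)"
    proof (rule has_field_derivative_transform_within[OF _ zero_less_one t])
      show "((\<lambda>s. \<Sum>j=1..m. profile c n (x s) i j * compound_weight c n (x s) j) has_real_derivative
          x t i * (w t i - (\<Sum>k=1..n. x t k * w t k))) (at t within I)"
        using ds val unfolding A_def by simp
      fix s assume "s \<in> I"
      then show "(\<Sum>j=1..m. profile c n (x s) i j * compound_weight c n (x s) j) = x s i"
        using x_recon[OF assms(1), of "x s" i] assms(2) i by auto
    qed
  qed
qed

end
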